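(* Let $X$ be a compact metric space and $f\colon X\to X$ a homeomorphism with the pseudo-orbit tracing property. If $f$ has a positively expansive measure, then $f$ has positive topological entropy.
   Context: Given $\delta\ge 0$, a bi-infinite sequence $(x_i)_{i\in\mathbb{Z}}$ in $X$ is a $\delta$-pseudo-orbit of $f$ if $d(f(x_i),x_{i+1})\le\delta$ for all $i\in\mathbb{Z}$; it is $\epsilon$-shadowed if there is $x\in X$ with $d(f^i(x),x_i)\le\epsilon$ for all $i\in\mathbb{Z}$. $f$ has the pseudo-orbit tracing property (POTP) if for every $\epsilon>0$ there is $\delta>0$ such that every $\delta$-pseudo-orbit can be $\epsilon$-shadowed. For $x\in X$ and $\delta\ge0$ let $\Phi_\delta(x)=\{y\in X: d(f^i(x),f^i(y))\le\delta \text{ for all } i\in\mathbb{N}=\{0,1,2,\dots\}\}$. A (not necessarily invariant) Borel probability measure $\mu$ on $X$ is positively expansive if there is $e>0$ (an expansivity constant) such that $\mu(\Phi_e(x))=0$ for every $x\in X$. *)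

theory Defs
  imports "HOL-Probability.Probability"
begin

definition zpow :: "('a \<Rightarrow> 'a) \<Rightarrow> int \<Rightarrow> 'a \<Rightarrow> 'a" where
  "zpow f i x = (if 0 \<le> i then (f ^^ nat i) x else (inv f ^^ nat (- i)) x)"

definition pseudo_orbit :: "('a::metric_space \<Rightarrow> 'a) \<Rightarrow> real \<Rightarrow> (int \<Rightarrow> 'a) \<Rightarrow> bool" where
  "pseudo_orbit f \<delta> xs \<longleftrightarrow> (\<forall>i. dist (f (xs i)) (xs (i + 1)) \<le> \<delta>)"

definition shadowed :: "('a::metric_space \<Rightarrow> 'a) \<Rightarrow> real \<Rightarrow> (int \<Rightarrow> 'a) \<Rightarrow> bool" where
  "shadowed f \<epsilon> xs \<longleftrightarrow> (\<exists>x. \<forall>i. dist (zpow f i x) (xs i) \<le> \<epsilon>)"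

definition POTP :: "('a::metric_space \<Rightarrow> 'a) \<Rightarrow> bool" where
  "POTP f \<longleftrightarrow> (\<forall>\<epsilon>>0. \<exists>\<delta>>0. \<forall>xs. pseudo_orbit f \<delta> xs \<longrightarrow> shadowed f \<epsilon> xs)"

definition Phi :: "('a::metric_space \<Rightarrow> 'a) \<Rightarrow> real \<Rightarrow> 'a \<Rightarrow> 'a set" where
  "Phi f \<delta> x = {y. \<forall>i::nat. dist ((f ^^ i) x) ((f ^^ i) y) \<le> \<delta>}"

definition pos_expansive_measure :: "('a::metric_space \<Rightarrow> 'a) \<Rightarrow> 'a measure \<Rightarrow> bool" where
  "pos_expansive_measure f M \<longleftrightarrow>
     prob_space M \<and> sets M = sets borel \<and>
     (\<exists>e>0. \<forall>x. measure M (Phi f e x) = 0)"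

definition separated :: "('a::metric_space \<Rightarrow> 'a) \<Rightarrow> nat \<Rightarrow> real \<Rightarrow> 'a set \<Rightarrow> bool" where
  "separated f n \<epsilon> S \<longleftrightarrow>
     (\<forall>x\<in>S. \<forall>y\<in>S. x \<noteq> y \<longrightarrow> (\<exists>i<n. dist ((f ^^ i) x) ((f ^^ i) y) > \<epsilon>))"

definition topological_entropy :: "('a::metric_space \<Rightarrow> 'a) \<Rightarrow> ereal" where
  "topological_entropy f =
     (SUP \<epsilon>\<in>{0<..}. limsup (\<lambda>n.
        SUP S\<in>{S. finite S \<and> S \<noteq> {} \<and> separated f (Suc n) \<epsilon> S}.
          ereal (ln (real (card S)) / real (Suc n))))"

end

theory Submission
  imports Defs
begin

definition loopc :: "('a::metric_space \<Rightarrow> 'a) \<Rightarrow> real \<Rightarrow> nat \<Rightarrow> (nat \<Rightarrow> 'a) \<Rightarrow> bool" where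
  "loopc f \<delta> L \<alpha> \<longleftrightarrow> (\<forall>i<L. dist (f (\<alpha> i)) (\<alpha> (Suc i mod L)) \<le> \<delta>)"

lemma int_div_mod_step:
  fixes i :: int and L :: nat
  assumes "L > 0"
  shows "(i + 1) mod int L = int (Suc (nat (i mod int L)) mod L)"
    and "Suc (nat (i mod int L)) < L \<Longrightarrow> (i + 1) div int L = i div int L"
proof -
  have r0: "0 \<le> i mod int L" "i mod int L < int L" using assms by auto
  have "(i + 1) mod int L = (i mod int L + 1) mod int L" by (simp add: mod_add_left_eq)
  also have "\<dots> = int (Suc (nat (i mod int L))) mod int L" using r0 by (simp add: add.commute)
  also have "\<dots> = int (Suc (nat (i mod int L)) mod L)" by (simp add: zmod_int)
  finally show "(i + 1) mod int L = int (Suc (nat (i mod int L)) mod L)" .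
  assume "Suc (nat (i mod int L)) < L"
  then have "i mod int L + 1 < int L" using r0 by linarith
  then have z: "(i mod int L + 1) div int L = 0" using r0 by (simp add: div_pos_pos_trivial)
  have "i + 1 = (i mod int L + 1) + (i div int L) * int L" by simp
  then have "(i + 1) div int L = (i mod int L + 1) div int L + i div int L"
    using assms by (metis div_mult_self1 add.commute of_nat_0_less_iff less_irrefl)
  then show "(i + 1) div int L = i div int L" using z by simp
qed

lemma entropy_pos_from_loops:
  fixes f :: "'a::metric_space \<Rightarrow> 'a"
  assumes eps: "\<epsilon> > 0" and shad: "\<forall>xs. pseudo_orbit f \<delta> xs \<longrightarrow> shadowed f \<epsilon> xs"
    and L: "L > 0" and la: "loopc f \<delta> L \<alpha>" and lb: "loopc f \<delta> L \<beta>" and b: "\<alpha> 0 = \<beta> 0"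
    and j: "j < L" and far: "dist (\<alpha> j) (\<beta> j) > 3*\<epsilon>"
  shows "topological_entropy f > 0"
proof -
  define z where "z A i = (if 0 \<le> i div int L \<and> nat (i div int L) \<in> A then \<beta> else \<alpha>) (nat (i mod int L))"
    for A :: "nat set" and i :: int
  have po: "pseudo_orbit f \<delta> (z A)" for A
    unfolding pseudo_orbit_def
  proof
    fix i :: int
    define q where "q = i div int L"
    define r where "r = nat (i mod int L)"
    define \<gamma> where "\<gamma> = (if 0 \<le> q \<and> nat q \<in> A then \<beta> else \<alpha>)"
    have zi: "z A i = \<gamma> r" unfolding z_def \<gamma>_def q_def r_def by simp
    have r: "r < L" unfolding r_def using L by (simp add: nat_less_iff)
    have lg: "loopc f \<delta> L \<gamma>" unfolding \<gamma>_def using la lb by simp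
    have "z A (i+1) = \<gamma> (Suc r mod L)"
    proof (cases "Suc r < L")
      case True
      then have "(i + 1) div int L = q" using int_div_mod_step(2)[OF L] unfolding q_def r_def by blast
      moreover have "nat ((i + 1) mod int L) = Suc r mod L" using int_div_mod_step(1)[OF L] unfolding r_def by simp
      ultimately show ?thesis unfolding z_def \<gamma>_def by simp
    next
      case False
      then have "Suc r = L" using r by simp
      then have "Suc r mod L = 0" by simp
      moreover have "nat ((i + 1) mod int L) = Suc r mod L" using int_div_mod_step(1)[OF L] unfolding r_def by simp
      ultimately show ?thesis unfolding z_def \<gamma>_def using b by simp
    qed
    then show "dist (f (z A i)) (z A (i + 1)) \<le> \<delta>" using lg r zi unfolding loopc_def by simp
  qed
  define xs where "xs A = (SOME x. \<forall>i. dist (zpow f i x) (z A i) \<le> \<epsilon>)" for A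
  have xs: "dist ((f ^^ n) (xs A)) (z A (int n)) \<le> \<epsilon>" for A n
  proof -
    have "\<exists>x. \<forall>i. dist (zpow f i x) (z A i) \<le> \<epsilon>" using shad po unfolding shadowed_def by blast
    then have "\<forall>i. dist (zpow f i (xs A)) (z A i) \<le> \<epsilon>" unfolding xs_def by (rule someI_ex)
    then show ?thesis by (metis zpow_def nat_int of_nat_0_le_iff)
  qed
  have zval: "z A (int (r * L + j')) = (if r \<in> A then \<beta> else \<alpha>) j'" if "j' < L" for A r j'
  proof -
    have "int (r * L + j') div int L = int r" using that by (simp add: zdiv_int[symmetric])
    moreover have "int (r * L + j') mod int L = int j'" using that by (simp add: zmod_int[symmetric])
    ultimately show ?thesis unfolding z_def by simp
  qed
  have sep: "\<exists>i<k*L. dist ((f ^^ i) (xs A)) ((f ^^ i) (xs A')) > \<epsilon>"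
    if AA: "A \<subseteq> {..<k}" "A' \<subseteq> {..<k}" "A \<noteq> A'" for A A' k
  proof -
    obtain r where r: "r < k" "r \<in> A \<longleftrightarrow> r \<notin> A'" using AA by blast
    define n where "n = r * L + j"
    have nk: "n < k * L"
    proof -
      have "n < r * L + L" unfolding n_def using j by simp
      also have "\<dots> = Suc r * L" by simp
      also have "\<dots> \<le> k * L" using r(1) by (intro mult_right_mono) auto
      finally show ?thesis .
    qed
    have d: "dist (z A (int n)) (z A' (int n)) > 3 * \<epsilon>"
      using zval[OF j] r(2) far unfolding n_def by (cases "r \<in> A") (auto simp: dist_commute)
    have "dist (z A (int n)) (z A' (int n)) \<le> dist ((f ^^ n) (xs A)) (z A (int n)) + dist ((f ^^ n) (xs A)) ((f ^^ n) (xs A')) + dist ((f ^^ n) (xs A')) (z A' (int n))"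
      using dist_triangle[of "z A (int n)" "z A' (int n)" "(f ^^ n) (xs A)"]
        dist_triangle[of "(f ^^ n) (xs A)" "z A' (int n)" "(f ^^ n) (xs A')"]
        dist_commute[of "z A (int n)" "(f ^^ n) (xs A)"] by linarith
    then have "dist ((f ^^ n) (xs A)) ((f ^^ n) (xs A')) > \<epsilon>" using d xs[of n A] xs[of n A'] by linarith
    then show ?thesis using nk by blast
  qed
  define g where "g n = (SUP S\<in>{S. finite S \<and> S \<noteq> {} \<and> separated f (Suc n) \<epsilon> S}.
          ereal (ln (real (card S)) / real (Suc n)))" for n
  have gk: "g (k * L - 1) \<ge> ereal (ln 2 / real L)" if k: "k \<ge> 1" for k
  proof -
    define S where "S = xs ` Pow {..<k}"
    have inj: "inj_on xs (Pow {..<k})"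
    proof (rule inj_onI)
      fix A A' assume "A \<in> Pow {..<k}" "A' \<in> Pow {..<k}" "xs A = xs A'"
      then show "A = A'" using sep[of A k A'] eps by force
    qed
    have cS: "card S = 2 ^ k" unfolding S_def using card_image[OF inj] by (simp add: card_Pow)
    have kL: "Suc (k * L - 1) = k * L" using k L by (simp add: Suc_diff_1)
    have sepS: "separated f (Suc (k * L - 1)) \<epsilon> S" unfolding separated_def kL S_def
    proof (intro ballI impI)
      fix x y assume x: "x \<in> xs ` Pow {..<k}" and y: "y \<in> xs ` Pow {..<k}" and xy: "x \<noteq> y"
      then obtain A A' where "A \<subseteq> {..<k}" "A' \<subseteq> {..<k}" "x = xs A" "y = xs A'" by auto
      with xy sep[of A k A'] show "\<exists>i<k * L. \<epsilon> < dist ((f ^^ i) x) ((f ^^ i) y)" by blast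
    qed
    have SS: "S \<in> {S. finite S \<and> S \<noteq> {} \<and> separated f (Suc (k * L - 1)) \<epsilon> S}"
      using sepS unfolding S_def by auto
    have eq: "ln (real (card S)) / real (Suc (k * L - 1)) = ln 2 / real L"
      unfolding cS kL using k L by (simp add: ln_realpow)
    show ?thesis unfolding g_def
      by (rule SUP_upper2[OF SS]) (simp only: eq order_refl)
  qed
  have h1: "limsup g \<ge> ereal (ln 2 / real L)"
    unfolding limsup_INF_SUP
  proof (rule INF_greatest)
    fix N
    have "N \<le> Suc N * L - 1" using L by (cases L) auto
    then have "g (Suc N * L - 1) \<le> \<Squnion> (g ` {N..})" by (intro SUP_upper) auto
    then show "ereal (ln 2 / real L) \<le> \<Squnion> (g ` {N..})" using gk[of "Suc N"] by auto
  qed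
  have h2: "limsup g \<le> topological_entropy f"
    unfolding topological_entropy_def g_def using eps
    by (intro SUP_upper[of \<epsilon> "{0<..}"]) auto
  have h3: "ereal (ln 2 / real L) > 0" using L by simp
  show ?thesis by (rule order_less_le_trans[OF order_less_le_trans[OF h3 h1] h2])
qed


lemma loop_concat:
  assumes eu: "\<forall>n. dist (f (u n)) (u (Suc n)) \<le> \<delta>" and ev: "\<forall>n. dist (f (v n)) (v (Suc n)) \<le> \<delta>"
    and L1: "L1 > 0" and L2: "L2 > 0" and uv: "u L1 = v 0" and vu: "v L2 = u 0"
  shows "loopc f \<delta> (L1 + L2) (\<lambda>i. if i < L1 then u i else v (i - L1))"
  unfolding loopc_def
proof (intro allI impI)
  fix i assume i: "i < L1 + L2"
  show "dist (f (if i < L1 then u i else v (i - L1)))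
     (if Suc i mod (L1 + L2) < L1 then u (Suc i mod (L1 + L2)) else v (Suc i mod (L1 + L2) - L1)) \<le> \<delta>"
  proof (cases "Suc i < L1 + L2")
    case True
    then have m: "Suc i mod (L1 + L2) = Suc i" by simp
    show ?thesis
    proof (cases "Suc i < L1")
      case True then show ?thesis using m eu by simp
    next
      case False
      show ?thesis
      proof (cases "Suc i = L1")
        case True
        then have "i < L1" by simp
        then show ?thesis using m True eu[rule_format, of i] uv by simp
      next
        case False
        then have "L1 \<le> i" using \<open>\<not> Suc i < L1\<close> by simp
        then have "Suc i - L1 = Suc (i - L1)" by simp
        then show ?thesis using m ev \<open>L1 \<le> i\<close> by simp
      qed
    qed
  next
    case False
    then have si: "Suc i = L1 + L2" using i by simp
    then have m: "Suc i mod (L1 + L2) = 0" by simp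
    have "L1 \<le> i" using si L2 by simp
    moreover have "Suc (i - L1) = L2" using si \<open>L1 \<le> i\<close> by simp
    ultimately show ?thesis using m ev[rule_format, of "i-L1"] vu L1 by simp
  qed
qed

lemma continuous_funpow:
  fixes f :: "'a::topological_space \<Rightarrow> 'a"
  shows "continuous_on UNIV f \<Longrightarrow> continuous_on UNIV (f ^^ n)"
proof (induction n)
  case 0
  have "f ^^ 0 = id" by (simp add: fun_eq_iff)
  then show ?case by simp
next
  case (Suc n)
  then have "continuous_on UNIV (\<lambda>x. f ((f ^^ n) x))"
    by (intro continuous_on_compose2[of UNIV f UNIV "f ^^ n"]) auto
  then show ?case by (simp add: o_def)
qed

theorem corollary1:
  fixes f :: "'a::metric_space \<Rightarrow> 'a"
  assumes "compact (UNIV :: 'a set)"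
    and "\<exists>g. homeomorphism UNIV UNIV f g"
    and "POTP f"
    and "\<exists>M. pos_expansive_measure f M"
  shows "topological_entropy f > 0"
proof -
  obtain g where hom: "homeomorphism UNIV UNIV f g" using assms(2) by blast
  have contf: "continuous_on UNIV f" using hom by (simp add: homeomorphism_def)
  obtain M where pe: "pos_expansive_measure f M" using assms(4) by blast
  then have ps: "prob_space M" and sM: "sets M = sets borel" unfolding pos_expansive_measure_def by auto
  obtain e where e: "e > 0" and eN: "\<forall>x. measure M (Phi f e x) = 0"
    using pe unfolding pos_expansive_measure_def by auto
  define \<epsilon> where "\<epsilon> = e / 4"
  have eps: "\<epsilon> > 0" using e unfolding \<epsilon>_def by simp
  obtain \<delta> where d: "\<delta> > 0" and shad: "\<forall>xs. pseudo_orbit f \<delta> xs \<longrightarrow> shadowed f \<epsilon> xs"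
    using assms(3) eps unfolding POTP_def by blast
  show ?thesis
  proof (cases "\<exists>L \<alpha> \<beta> j. L > 0 \<and> loopc f \<delta> L \<alpha> \<and> loopc f \<delta> L \<beta> \<and> \<alpha> 0 = \<beta> 0 \<and> j < L \<and> dist (\<alpha> j) (\<beta> j) > 3*\<epsilon>")
    case True
    then obtain L \<alpha> \<beta> j where H: "L > 0" "loopc f \<delta> L \<alpha>" "loopc f \<delta> L \<beta>" "\<alpha> 0 = \<beta> 0" "j < L" "dist (\<alpha> j) (\<beta> j) > 3*\<epsilon>"
      by blast
    show ?thesis by (rule entropy_pos_from_loops[OF eps shad H])
  next
    case False
    have noH: "dist (\<alpha> j) (\<beta> j) \<le> 3*\<epsilon>"
      if "L > 0" "loopc f \<delta> L \<alpha>" "loopc f \<delta> L \<beta>" "\<alpha> 0 = \<beta> 0" "j < L" for L \<alpha> \<beta> j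
    proof (rule ccontr)
      assume "\<not> dist (\<alpha> j) (\<beta> j) \<le> 3*\<epsilon>"
      then have "dist (\<alpha> j) (\<beta> j) > 3*\<epsilon>" by simp
      with that have "\<exists>L \<alpha> \<beta> j. L > 0 \<and> loopc f \<delta> L \<alpha> \<and> loopc f \<delta> L \<beta> \<and> \<alpha> 0 = \<beta> 0 \<and> j < L \<and> dist (\<alpha> j) (\<beta> j) > 3*\<epsilon>"
        by blast
      with False show False by blast
    qed
    have "False"
    proof -
      interpret prob_space M by (rule ps)
    have ucf: "uniformly_continuous_on UNIV f" by (rule compact_uniformly_continuous[OF contf assms(1)])
    have "\<delta>/2 > 0" using d by simp
    from ucf[unfolded uniformly_continuous_on_def, rule_format, OF this]
    obtain \<eta>0 where \<eta>0: "\<eta>0 > 0" "\<And>x y. dist y x < \<eta>0 \<Longrightarrow> dist (f y) (f x) < \<delta>/2"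
      by auto
    define \<eta> where "\<eta> = min \<eta>0 (min (\<delta>/2) (e/8))"
    have \<eta>: "\<eta> > 0" "\<eta> \<le> \<eta>0" "\<eta> \<le> \<delta>/2" "\<eta> \<le> e/8" using \<eta>0 d e unfolding \<eta>_def by auto
    obtain P where P: "finite P" "(UNIV::'a set) \<subseteq> \<Union> ((\<lambda>x. ball x \<eta>) ` P)"
    proof -
      have "(UNIV::'a set) \<subseteq> \<Union> ((\<lambda>x. ball x \<eta>) ` UNIV)" using \<eta>(1) by auto
      then show ?thesis using compactE_image[OF assms(1), of UNIV "\<lambda>x. ball x \<eta>"] that by blast
    qed
    have exP: "\<exists>p. p \<in> P \<and> dist y p < \<eta>" for y :: 'a
      using P(2) by (force simp: dist_commute)
    define it where "it x n = (SOME p. p \<in> P \<and> dist ((f ^^ n) x) p < \<eta>)" for x n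
    have itPd: "it x n \<in> P \<and> dist ((f ^^ n) x) (it x n) < \<eta>" for x n
      unfolding it_def by (rule someI_ex[OF exP])
    have itP: "it x n \<in> P" for x n using itPd by blast
    have itd: "dist ((f ^^ n) x) (it x n) < \<eta>" for x n using itPd by blast
    have edge: "dist (f (it x n)) (it x (Suc n)) \<le> \<delta>" for x n
    proof -
      have "dist (it x n) ((f ^^ n) x) < \<eta>0" using itd[of n x] \<eta>(2) by (simp add: dist_commute)
      then have a: "dist (f (it x n)) (f ((f ^^ n) x)) < \<delta>/2" by (rule \<eta>0(2))
      have b: "dist ((f ^^ Suc n) x) (it x (Suc n)) < \<delta>/2" using itd[of "Suc n" x] \<eta>(3) by linarith
      have a2: "dist (f (it x n)) ((f ^^ Suc n) x) < \<delta>/2" using a by simp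
      show ?thesis using a2 b dist_triangle[of "f (it x n)" "it x (Suc n)" "(f ^^ Suc n) x"] by linarith
    qed
    define T where "T x = (SOME T. infinite {m. it x m = it x T})" for x
    have Tinf: "infinite {m. it x m = it x (T x)}" for x
    proof -
      have "finite (range (it x))" using itP P(1) by (meson finite_subset image_subsetI)
      from inf_img_fin_dom[OF this infinite_UNIV_nat] obtain y where
        "y \<in> range (it x)" "infinite (it x -` {y})" by blast
      then obtain T0 where "infinite {m. it x m = it x T0}" by (auto simp: vimage_def)
      then show ?thesis unfolding T_def by (rule someI)
    qed
    have Trec: "\<exists>m>n. it x m = it x (T x)" for x n
      using Tinf[of x] unfolding infinite_nat_iff_unbounded by auto
    define key where "key x = map (it x) [0..<Suc (T x)]" for x
    have close: "dist ((f ^^ n) x) ((f ^^ n) y) \<le> e" if k: "key x = key y" for x y n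
    proof -
      have TT: "T x = T y" using arg_cong[OF k, of length] unfolding key_def by simp
      have pre: "it x m = it y m" if "m \<le> T x" for m
      proof -
        have "key x ! m = key y ! m" using k by simp
        then show ?thesis using that TT unfolding key_def by (simp del: upt_Suc add: less_Suc_eq_le)
      qed
      have d3: "dist (it x n) (it y n) \<le> 3*\<epsilon>"
      proof (cases "n \<le> T x")
        case True then show ?thesis using pre eps by simp
      next
        case False
        define T0 where "T0 = T x"
        obtain n1 where n1: "n1 > n" "it x n1 = it x T0" using Trec[of n x] unfolding T0_def by blast
        obtain n2 where n2: "n2 > n" "it y n2 = it y T0" using Trec[of n y] TT unfolding T0_def by auto
        have nT: "T0 < n" using False unfolding T0_def by simp
        have b0: "it x T0 = it y T0" using pre unfolding T0_def by simp
        define u where "u i = it x (T0 + i)" for i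
        define v where "v i = it y (T0 + i)" for i
        have eu: "\<forall>i. dist (f (u i)) (u (Suc i)) \<le> \<delta>" unfolding u_def using edge[of x] by simp
        have ev: "\<forall>i. dist (f (v i)) (v (Suc i)) \<le> \<delta>" unfolding v_def using edge[of y] by simp
        define L1 where "L1 = n1 - T0"
        define L2 where "L2 = n2 - T0"
        have L1: "L1 > 0" and L2: "L2 > 0" using n1 n2 nT unfolding L1_def L2_def by auto
        have uL: "u L1 = v 0" using n1 nT b0 unfolding u_def v_def L1_def by simp
        have vL: "v L2 = u 0" using n2 nT b0 unfolding u_def v_def L2_def by simp
        have l1: "loopc f \<delta> (L1 + L2) (\<lambda>i. if i < L1 then u i else v (i - L1))"
          by (rule loop_concat[OF eu ev L1 L2 uL vL])
        have l2: "loopc f \<delta> (L1 + L2) (\<lambda>i. if i < L2 then v i else u (i - L2))"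
          using loop_concat[OF ev eu L2 L1 vL uL] by (simp add: add.commute)
        have j1: "n - T0 < L1" and j2: "n - T0 < L2" using n1 n2 nT unfolding L1_def L2_def by auto
        have "dist ((\<lambda>i. if i < L1 then u i else v (i - L1)) (n - T0)) ((\<lambda>i. if i < L2 then v i else u (i - L2)) (n - T0)) \<le> 3*\<epsilon>"
          by (rule noH[OF _ l1 l2]) (use L1 L2 j1 b0 in \<open>auto simp: u_def v_def\<close>)
        then show ?thesis using j1 j2 nT unfolding u_def v_def by simp
      qed
      have "dist ((f ^^ n) x) ((f ^^ n) y) \<le> dist ((f ^^ n) x) (it x n) + dist (it x n) ((f ^^ n) y)"
        by (rule dist_triangle)
      also have "\<dots> \<le> dist ((f ^^ n) x) (it x n) + (dist (it x n) (it y n) + dist (it y n) ((f ^^ n) y))"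
        using dist_triangle by (intro add_left_mono) 
      finally show ?thesis using itd[of n x] itd[of n y] d3 \<eta>(4) unfolding \<epsilon>_def
        by (simp add: dist_commute)
    qed
    have PhiM: "Phi f e x \<in> null_sets M" for x
    proof -
      have eq: "Phi f e x = (\<Inter>i. {y. dist ((f ^^ i) x) ((f ^^ i) y) \<le> e})" by (auto simp: Phi_def)
      have "closed {y. dist ((f ^^ i) x) ((f ^^ i) y) \<le> e}" for i
        by (intro closed_Collect_le continuous_on_dist continuous_on_const continuous_funpow[OF contf])
      then have "closed (Phi f e x)" unfolding eq by (intro closed_INT) auto
      then have "Phi f e x \<in> sets M" unfolding sM by (rule borel_closed)
      moreover have "emeasure M (Phi f e x) = 0"
        using eN emeasure_eq_measure by simp
      ultimately show ?thesis by auto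
    qed
    define rep where "rep k = (SOME x. key x = k)" for k
    have cover: "UNIV \<subseteq> (\<Union>k\<in>range key. Phi f e (rep k))"
    proof
      fix x :: 'a
      have "key (rep (key x)) = key x" unfolding rep_def by (rule someI[of "\<lambda>y. key y = key x" x]) simp
      then have "x \<in> Phi f e (rep (key x))" using close unfolding Phi_def by auto
      then show "x \<in> (\<Union>k\<in>range key. Phi f e (rep k))" by auto
    qed
    have "range key \<subseteq> lists P" unfolding key_def using itP by auto
    then have cnt: "countable (range key)"
      using countable_lists[OF countable_finite[OF P(1)]] countable_subset by blast
    have N: "(\<Union>k\<in>range key. Phi f e (rep k)) \<in> null_sets M"
      by (rule null_sets_UN'[OF cnt]) (rule PhiM)
    have sp: "space M = UNIV" using sets_eq_imp_space_eq[OF sM] by simp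
    have "UNIV \<in> null_sets M"
      by (rule null_sets_subset[OF N _ cover]) (metis sets.top sp)
    then have "emeasure M (space M) = 0" using sp by auto
    then show "False" using emeasure_space_1 by simp
    qed

    then show ?thesis ..
  qed
qed

end
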